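(* Let $p$ be a prime, $k\ge 1$ an integer, $q=p^k$, let $f(x)\in\mathbb F_q[x]$ and $a\in\mathbb F_q$. Then: (i) The polynomial $m_f(x)$ has integer coefficients. The sequence $\{u_s(f,a)\}_{s=1}^\infty$ is a linear recursion sequence and $m_f(x)$ is a generating polynomial of it. Moreover, $m_f(x)$ is the minimal polynomial of the sequence $\{u_s(f,0)\}_{s=1}^\infty$. (ii) As formal power series (equivalently, as rational functions) in $x$, $$\sum_{s=1}^{\infty}N_{s}(f,a)x^s=\frac{x}{1-qx}-\frac{x\,\tilde M_{f,a}(x)}{q\,M_f(x)},$$ where $$M_f(x):=\prod_{\substack{m\in\mathbb F_q^{*}\\ S_{f,m}\neq 0}}\Big(x-\frac{1}{S_{f,m}}\Big),\qquad \tilde M_{f,a}(x):=\sum_{\substack{n\in \mathbb F_q^{*}\\ S_{f,n}\neq0}}\zeta_p^{\mathrm{Tr}(-na)}\prod_{\substack{m\in \mathbb F_q^{*}\setminus\{n\}\\ S_{f,m}\neq 0}}\Big(x-\frac{1}{S_{f,m}}\Big)$$ (the products run over elements $m$, so repeated values of $S_{f,m}$ give repeated factors). In particular, for $a=0$, $\tilde M_{f,0}(x)=M_f'(x)$, the derivative of $M_f(x)$, so that $\sum_{s\ge1}N_s(f,0)x^s=\frac{x}{1-qx}-\frac{xM_f'(x)}{qM_f(x)}$.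
   Context: $\mathbb F_q$ is the finite field with $q=p^k$ elements, $\mathbb F_q^*=\mathbb F_q\setminus\{0\}$. $\mathrm{Tr}(b)=\sum_{i=0}^{k-1}b^{p^i}$ is the trace map $\mathbb F_q\to\mathbb F_p$, and $\zeta_p=\exp(2\pi i/p)$ (exponents in $\mathbb F_p$ are read as integers mod $p$). For $m\in\mathbb F_q$, $S_{f,m}:=\sum_{x\in\mathbb F_q}\zeta_p^{\mathrm{Tr}(mf(x))}$. Let $\Omega_f:=\{S_{f,m}: m\in\mathbb F_q^*,\ S_{f,m}\neq0\}$ (the set of distinct nonzero values) and $m_f(x):=\prod_{\lambda\in\Omega_f}(x-\lambda)$. For $s\ge1$, $N_s(f,a)$ is the number of $(x_1,\dots,x_s)\in\mathbb F_q^s$ with $f(x_1)+\cdots+f(x_s)=a$, and $u_s(f,a):=N_s(f,a)-q^{s-1}$. A sequence of integers $\{a_s\}_{s\ge1}$ is a linear recursion sequence if there is $g(x)=\sum_{i=0}^d k_ix^i\in\mathbb Z[x]$ with $k_d\neq0$ such that $k_0a_{j+1}+k_1a_{j+2}+\cdots+k_da_{j+d+1}=0$ for all integers $j\ge0$; such $g$ is called a generating polynomial of the sequence. The generating polynomials form a principal ideal of $\mathbb Z[x]$, generated by a polynomial $h$ of minimal degree whose coefficients have gcd $1$ (unique up to sign); $h$ is the minimal polynomial of the sequence, and its degree is the degree of the sequence. *)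

theory Defs
  imports "HOL-Computational_Algebra.Computational_Algebra" "HOL-Library.FuncSet"
begin

definition zeta :: "nat \<Rightarrow> complex" where
  "zeta p = exp (2 * of_real pi * \<i> / of_nat p)"

(* Trace F_q -> F_p, q = p^k, with values in the prime subfield of 'a *)
definition tr :: "nat \<Rightarrow> nat \<Rightarrow> 'a::field \<Rightarrow> 'a" where
  "tr p k b = (\<Sum>i<k. b ^ (p ^ i))"

definition tr_nat :: "nat \<Rightarrow> nat \<Rightarrow> 'a::field \<Rightarrow> nat" where
  "tr_nat p k b = (THE j. j < p \<and> of_nat j = tr p k b)"

definition psi :: "nat \<Rightarrow> nat \<Rightarrow> 'a::field \<Rightarrow> complex" where
  "psi p k b = zeta p ^ tr_nat p k b"

definition S :: "nat \<Rightarrow> nat \<Rightarrow> 'a::{field,finite} poly \<Rightarrow> 'a \<Rightarrow> complex" where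
  "S p k f m = (\<Sum>x\<in>(UNIV::'a set). psi p k (m * poly f x))"

definition Omega :: "nat \<Rightarrow> nat \<Rightarrow> 'a::{field,finite} poly \<Rightarrow> complex set" where
  "Omega p k f = {S p k f m | m. m \<noteq> 0 \<and> S p k f m \<noteq> 0}"

definition mpoly :: "nat \<Rightarrow> nat \<Rightarrow> 'a::{field,finite} poly \<Rightarrow> complex poly" where
  "mpoly p k f = (\<Prod>c\<in>Omega p k f. [:-c, 1:])"

definition N :: "nat \<Rightarrow> 'a::{field,finite} poly \<Rightarrow> 'a \<Rightarrow> nat" where
  "N s f a = card {x \<in> {0..<s} \<rightarrow>\<^sub>E (UNIV::'a set). (\<Sum>i<s. poly f (x i)) = a}"

definition u :: "nat \<Rightarrow> 'a::{field,finite} poly \<Rightarrow> 'a \<Rightarrow> int" where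
  "u s f a = int (N s f a) - int (card (UNIV::'a set)) ^ (s - 1)"

(* g = sum k_i x^i with k_d \<noteq> 0 is a generating polynomial of the integer sequence
   (a_s)_{s \<ge> 1} (given as a function on nat, values at s \<ge> 1 used) *)
definition gen_poly :: "int poly \<Rightarrow> (nat \<Rightarrow> int) \<Rightarrow> bool" where
  "gen_poly g a \<longleftrightarrow> g \<noteq> 0 \<and>
     (\<forall>j. (\<Sum>i\<le>degree g. coeff g i * a (j + i + 1)) = 0)"

definition lin_rec_seq :: "(nat \<Rightarrow> int) \<Rightarrow> bool" where
  "lin_rec_seq a \<longleftrightarrow> (\<exists>g. gen_poly g a)"

definition min_poly_seq :: "int poly \<Rightarrow> (nat \<Rightarrow> int) \<Rightarrow> bool" where
  "min_poly_seq h a \<longleftrightarrow> gen_poly h a \<and> content h = 1 \<and>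
     (\<forall>g. gen_poly g a \<longrightarrow> degree h \<le> degree g)"

definition Mf :: "nat \<Rightarrow> nat \<Rightarrow> 'a::{field,finite} poly \<Rightarrow> complex poly" where
  "Mf p k f = (\<Prod>m\<in>{m. m \<noteq> 0 \<and> S p k f m \<noteq> 0}. [:- 1 / S p k f m, 1:])"

definition Mt :: "nat \<Rightarrow> nat \<Rightarrow> 'a::{field,finite} poly \<Rightarrow> 'a \<Rightarrow> complex poly" where
  "Mt p k f a = (\<Sum>n\<in>{n. n \<noteq> 0 \<and> S p k f n \<noteq> 0}.
      smult (psi p k (- n * a))
        (\<Prod>m\<in>{m. m \<noteq> 0 \<and> m \<noteq> n \<and> S p k f m \<noteq> 0}. [:- 1 / S p k f m, 1:]))"

end

theory Submission
  imports Defs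
begin


locale fq =
  fixes p k :: nat and ty :: "'a::{field,finite} itself"
  assumes prime_p: "prime p" and k_ge: "k \<ge> 1"
    and card_q: "card (UNIV::'a set) = p ^ k" and char_p: "CHAR('a) = p"
begin

lemma p_gt1: "p > 1" using prime_p prime_gt_1_nat by blast

lemma prime_CHAR: "prime CHAR('a)" using char_p prime_p by simp

lemma p_pos [simp]: "0 < p" using p_gt1 by simp

lemma p_ge1 [simp]: "Suc 0 \<le> p" using p_gt1 by simp

lemma pow_card: "(x::'a) ^ card (UNIV :: 'a set) = x"
proof (cases "x = 0")
  case False
  have "x * (\<Prod>y\<in>UNIV-{0}. x * y) = x * x ^ (card (UNIV :: 'a set) - 1) * \<Prod>(UNIV-{0})"
    by (simp add: prod.distrib mult_ac)
  also have "x * x ^ (card (UNIV :: 'a set) - 1) = x ^ Suc (card (UNIV :: 'a set) - 1)"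
    by (subst power_Suc) auto
  also have "Suc (card (UNIV :: 'a set) - 1) = card (UNIV :: 'a set)"
    using finite_UNIV_card_ge_0[where ?'a = 'a] by simp
  also have "(\<Prod>y\<in>UNIV-{0}. x * y) = (\<Prod>y\<in>UNIV-{0}. y)"
    by (rule prod.reindex_bij_witness[of _ "\<lambda>y. y / x" "\<lambda>y. x * y"]) (use False in auto)
  finally show ?thesis
    by simp
qed (use finite_UNIV_card_ge_0[where ?'a = 'a] in auto)

lemma frob_pow: "((x::'a) + y) ^ (p ^ i) = x ^ (p ^ i) + y ^ (p ^ i)"
  by (rule freshmans_dream') (auto simp: prime_p char_p)

lemma frob_sum: "(\<Sum>j\<in>A. (f j::'a)) ^ (p ^ i) = (\<Sum>j\<in>A. f j ^ (p ^ i))"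
  by (induction A rule: infinite_finite_induct) (auto simp: frob_pow)

lemma tr_add: "tr p k ((x::'a) + y) = tr p k x + tr p k y"
  unfolding tr_def by (simp add: frob_pow sum.distrib)

lemma tr_zero: "tr p k (0::'a) = 0"
  unfolding tr_def by (simp add: zero_power)

lemma tr_pow_p: "tr p k (x::'a) ^ p = tr p k x"
proof -
  have "tr p k x ^ p = (\<Sum>i<k. x ^ (p ^ i)) ^ (p ^ 1)" by (simp add: tr_def)
  also have "\<dots> = (\<Sum>i<k. x ^ (p ^ Suc i))" 
    by (subst frob_sum) (simp add: power_mult[symmetric] mult.commute)
  also have "\<dots> = (\<Sum>i<Suc k. x ^ (p ^ i)) - x"
    by (subst sum.lessThan_Suc_shift) simp
  also have "\<dots> = (\<Sum>i<k. x ^ (p ^ i)) + x ^ (p^k) - x"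
    by simp
  also have "x ^ (p^k) = x" using pow_card card_q by simp
  finally show ?thesis by (simp add: tr_def)
qed

lemma of_nat_pow_p: "(of_nat j :: 'a) ^ p = of_nat j"
proof (induction j)
  case 0 then show ?case using p_gt1 by simp
next
  case (Suc j)
  have "(of_nat (Suc j) :: 'a) ^ p = (of_nat j + 1) ^ (p ^ 1)" by (simp add: add.commute)
  also have "\<dots> = of_nat j ^ p + 1" by (subst frob_pow) simp
  finally have "(of_nat (Suc j) :: 'a) ^ p = of_nat j ^ p + 1" .
  then show ?case using Suc by simp
qed

lemma of_nat_eq_cong: "(of_nat a :: 'a) = of_nat b \<longleftrightarrow> a mod p = b mod p"
proof -
  have "(of_nat a :: 'a) = of_nat b \<longleftrightarrow> p dvd (if a \<le> b then b - a else a - b)"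
  proof (cases "a \<le> b")
    case True
    then have "(of_nat b :: 'a) = of_nat a + of_nat (b - a)" by (simp add: of_nat_diff)
    then show ?thesis using True of_nat_eq_0_iff_char_dvd[of "b-a", where 'a='a] char_p by auto
  next
    case False
    then have "(of_nat a :: 'a) = of_nat b + of_nat (a - b)" by (simp add: of_nat_diff)
    then show ?thesis using False of_nat_eq_0_iff_char_dvd[of "a-b", where 'a='a] char_p by auto
  qed
  also have "\<dots> \<longleftrightarrow> a mod p = b mod p"
    by (auto simp: mod_eq_dvd_iff_nat dvd_imp_mod_0 le_mod_geq) 
       (metis mod_eq_dvd_iff_nat nat_le_linear)+
  finally show ?thesis .
qed

lemma prime_field:
  assumes "(y::'a) ^ p = y" shows "\<exists>j<p. (of_nat j :: 'a) = y"
proof -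
  define P :: "'a poly" where "P = monom 1 p - monom 1 1"
  have polyP: "poly P x = x ^ p - x" for x by (simp add: P_def poly_monom)
  have "coeff P p = 1" using p_gt1 by (simp add: P_def)
  then have P0: "P \<noteq> 0" by auto
  have degP: "degree P \<le> p" unfolding P_def
    by (rule degree_diff_le) (auto simp: degree_monom_eq p_gt1 intro: order.trans[OF degree_monom_le])
  have "card {x. poly P x = 0} \<le> p" using card_poly_roots_bound[OF P0] degP by linarith
  moreover have sub: "(of_nat ` {..<p} :: 'a set) \<subseteq> {x. poly P x = 0}"
    using of_nat_pow_p by (auto simp: polyP)
  moreover have inj: "inj_on (of_nat :: nat \<Rightarrow> 'a) {..<p}"
    by (auto simp: inj_on_def of_nat_eq_cong)
  then have "card (of_nat ` {..<p} :: 'a set) = p" by (simp add: card_image)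
  moreover have "card (of_nat ` {..<p} :: 'a set) \<le> card {x. poly P x = 0}"
    using sub by (intro card_mono poly_roots_finite[OF P0])
  ultimately have "(of_nat ` {..<p} :: 'a set) = {x. poly P x = 0}"
    by (intro card_subset_eq poly_roots_finite[OF P0]) auto
  moreover have "y \<in> {x. poly P x = 0}" using assms by (simp add: polyP)
  ultimately have "y \<in> of_nat ` {..<p}" by simp
  then show ?thesis by auto
qed

lemma tr_nat_prop: "tr_nat p k (b::'a) < p \<and> of_nat (tr_nat p k b) = tr p k b"
proof -
  obtain j where j: "j < p" "(of_nat j :: 'a) = tr p k b" using prime_field[OF tr_pow_p] by blast
  show ?thesis unfolding tr_nat_def
  proof (rule theI[of _ j])
    show "j < p \<and> of_nat j = tr p k b" using j by simp
    fix i assume "i < p \<and> (of_nat i :: 'a) = tr p k b"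
    then show "i = j" using j of_nat_eq_cong[of i j] by simp
  qed
qed

lemma tr_nat_less: "tr_nat p k (b::'a) < p" using tr_nat_prop by blast
lemma of_nat_tr_nat: "of_nat (tr_nat p k (b::'a)) = tr p k b" using tr_nat_prop by blast

abbreviation "z \<equiv> zeta p"

lemma zeta_cis: "z = cis (2 * pi / p)"
  by (simp add: zeta_def cis_conv_exp mult_ac)

lemma zeta_pow: "z ^ n = cis (2 * pi * real n / p)"
  by (simp add: zeta_cis DeMoivre mult_ac)

lemma zeta_pow_p [simp]: "z ^ p = 1"
  using p_gt1 by (simp add: zeta_pow)

lemma zeta_nz [simp]: "z \<noteq> 0"
  using zeta_pow_p by (metis one_neq_zero p_pos power_0_left less_not_refl)

lemma zeta_pow_mod: "z ^ n = z ^ (n mod p)"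
proof -
  have "z ^ n = z ^ (p * (n div p) + n mod p)" by (simp only: mult.commute[of p] div_mult_mod_eq)
  also have "\<dots> = (z ^ p) ^ (n div p) * z ^ (n mod p)" by (simp only: power_add power_mult)
  also have "\<dots> = z ^ (n mod p)" by simp
  finally show ?thesis .
qed

lemma zeta_pow_eq_iff: "z ^ a = z ^ b \<longleftrightarrow> a mod p = b mod p"
proof
  assume "z ^ a = z ^ b"
  then have "z ^ (a mod p) = z ^ (b mod p)" by (simp add: zeta_pow_mod[of a] zeta_pow_mod[of b])
  then have "cis (2 * pi * real (a mod p) / p) = cis (2 * pi * real (b mod p) / p)"
    by (simp add: zeta_pow)
  moreover have "inj_on (\<lambda>k. cis (2 * pi * real k / real p)) {..<p}"
    using bij_betw_roots_unity[OF p_pos] by (simp add: bij_betw_def)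
  ultimately show "a mod p = b mod p" by (auto simp: inj_on_def)
next
  assume "a mod p = b mod p"
  then show "z ^ a = z ^ b" by (simp add: zeta_pow_mod[of a] zeta_pow_mod[of b])
qed

lemma zeta_pow_eq_1_iff: "z ^ a = 1 \<longleftrightarrow> p dvd a"
  using zeta_pow_eq_iff[of a 0] by (simp add: mod_eq_0_iff_dvd)

lemma psi_def': "psi p k (b::'a) = z ^ tr_nat p k b" by (simp add: psi_def)

lemma psi_add: "psi p k ((b::'a) + c) = psi p k b * psi p k c"
proof -
  have "(of_nat (tr_nat p k (b + c)) :: 'a) = of_nat (tr_nat p k b + tr_nat p k c)"
    by (simp add: of_nat_tr_nat tr_add)
  then have "tr_nat p k (b + c) mod p = (tr_nat p k b + tr_nat p k c) mod p"
    by (rule iffD1[OF of_nat_eq_cong])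
  then show ?thesis by (simp add: psi_def' power_add[symmetric] zeta_pow_eq_iff)
qed

lemma tr_nat_zero: "tr_nat p k (0::'a) = 0"
proof -
  have "(of_nat (tr_nat p k (0::'a)) :: 'a) = of_nat 0" by (simp add: of_nat_tr_nat tr_zero)
  then have "tr_nat p k (0::'a) mod p = 0 mod p" by (rule iffD1[OF of_nat_eq_cong])
  then show ?thesis using tr_nat_less[of 0] by simp
qed

lemma psi_zero [simp]: "psi p k (0::'a) = 1"
  by (simp add: psi_def' tr_nat_zero)

lemma psi_sum: "psi p k (\<Sum>i\<in>A. (g i :: 'a)) = (\<Prod>i\<in>A. psi p k (g i))"
  by (induction A rule: infinite_finite_induct) (auto simp: psi_add)

lemma of_nat_pow_ppow: "(of_nat t :: 'a) ^ (p ^ i) = of_nat t"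
  by (induction i) (simp_all add: power_mult of_nat_pow_p)

lemma tr_scal: "tr p k (of_nat t * (b::'a)) = of_nat t * tr p k b"
  by (simp add: tr_def power_mult_distrib of_nat_pow_ppow sum_distrib_left)

lemma psi_scal: "psi p k (of_nat t * (b::'a)) = z ^ (t * tr_nat p k b)"
proof -
  have "(of_nat (tr_nat p k (of_nat t * b)) :: 'a) = of_nat (t * tr_nat p k b)"
    by (simp add: of_nat_tr_nat tr_scal)
  then have "tr_nat p k (of_nat t * b) mod p = (t * tr_nat p k b) mod p"
    by (rule iffD1[OF of_nat_eq_cong])
  then show ?thesis by (simp add: psi_def' zeta_pow_eq_iff)
qed

lemma psi_neq1: assumes "tr p k (b::'a) \<noteq> 0" shows "psi p k b \<noteq> 1"
proof
  assume "psi p k b = 1"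
  then have "p dvd tr_nat p k b" by (simp add: psi_def' zeta_pow_eq_1_iff)
  then have "tr_nat p k b = 0" using tr_nat_less[of b] by (metis dvd_imp_le le_antisym less_imp_le_nat not_less neq0_conv)
  then show False using assms of_nat_tr_nat[of b] by simp
qed

lemma exists_tr_nz: "\<exists>b::'a. tr p k b \<noteq> 0"
proof (rule ccontr)
  assume "\<not> ?thesis"
  then have all0: "tr p k (b::'a) = 0" for b by blast
  define T :: "'a poly" where "T = (\<Sum>i<k. monom 1 (p ^ i))"
  have polyT: "poly T x = tr p k x" for x by (simp add: T_def tr_def poly_sum poly_monom)
  have pinj: "p ^ i = p ^ j \<longleftrightarrow> i = j" for i j using p_gt1 by (simp add: power_inject_exp)
  have "coeff T (p ^ (k - 1)) = (\<Sum>i<k. if p ^ i = p ^ (k-1) then 1 else 0)"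
    by (simp add: T_def coeff_sum coeff_monom)
  also have "\<dots> = (\<Sum>i\<in>{k-1}. 1)"
    using k_ge by (intro sum.mono_neutral_cong_right) (auto simp: pinj)
  finally have "coeff T (p ^ (k - 1)) = 1" by simp
  then have T0: "T \<noteq> 0" by auto
  have "coeff T n = 0" if "n > p ^ (k - 1)" for n
  proof -
    have "p ^ i \<noteq> n" if "i < k" for i
    proof -
      have "p ^ i \<le> p ^ (k - 1)" using that p_gt1 by (intro power_increasing) auto
      then show ?thesis using \<open>n > p ^ (k-1)\<close> by linarith
    qed
    then show ?thesis by (simp add: T_def coeff_sum coeff_monom)
  qed
  then have "degree T \<le> p ^ (k - 1)" by (intro degree_le) auto
  moreover have "{x. poly T x = 0} = UNIV" by (auto simp: polyT all0)
  ultimately have "card (UNIV :: 'a set) \<le> p ^ (k - 1)"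
    using card_poly_roots_bound[OF T0] by simp
  moreover have "p ^ (k - 1) < p ^ k" using p_gt1 k_ge by (intro power_strict_increasing) auto
  ultimately show False using card_q by simp
qed

lemma orth: "(\<Sum>m\<in>UNIV. psi p k (m * (c::'a))) = (if c = 0 then of_nat (card (UNIV::'a set)) else 0)"
proof (cases "c = 0")
  case False
  obtain b :: 'a where b: "tr p k b \<noteq> 0" using exists_tr_nz by blast
  define m0 where "m0 = b / c"
  have "(\<Sum>m\<in>UNIV. psi p k (m * c)) = (\<Sum>m\<in>UNIV. psi p k ((m + m0) * c))"
    by (rule sum.reindex_bij_witness[of _ "\<lambda>m. m + m0" "\<lambda>m. m - m0"]) auto
  also have "\<dots> = (\<Sum>m\<in>UNIV. psi p k b * psi p k (m * c))"
  proof (rule sum.cong)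
    fix m have "(m + m0) * c = b + m * c" using False by (simp add: m0_def field_simps)
    then show "psi p k ((m + m0) * c) = psi p k b * psi p k (m * c)" by (simp add: psi_add)
  qed simp
  also have "\<dots> = psi p k b * (\<Sum>m\<in>UNIV. psi p k (m * c))" by (simp add: sum_distrib_left)
  finally have "(1 - psi p k b) * (\<Sum>m\<in>UNIV. psi p k (m * c)) = 0" by (simp add: algebra_simps)
  then show ?thesis using psi_neq1[OF b] False by simp
qed simp

end


definition ip :: "int poly \<Rightarrow> 'b::comm_ring_1 poly" where "ip A = map_poly of_int A"

lemma coeff_ip [simp]: "coeff (ip A) n = of_int (coeff A n)"
  by (simp add: ip_def coeff_map_poly)

lemma ip_add: "ip (A + B) = (ip A + ip B :: 'b::comm_ring_1 poly)"
  by (rule poly_eqI) simp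
lemma ip_diff: "ip (A - B) = (ip A - ip B :: 'b::comm_ring_1 poly)"
  by (rule poly_eqI) simp
lemma ip_0 [simp]: "ip 0 = 0" by (rule poly_eqI) simp
lemma ip_1 [simp]: "ip 1 = 1" by (rule poly_eqI) (simp add: coeff_1)
lemma ip_mult: "ip (A * B) = (ip A * ip B :: 'b::comm_ring_1 poly)"
  by (rule poly_eqI) (simp add: coeff_mult)
lemma ip_monom [simp]: "ip (monom c n) = monom (of_int c) n"
  by (rule poly_eqI) (simp add: coeff_monom)
lemma ip_smult: "ip (smult c A) = smult (of_int c) (ip A :: 'b::comm_ring_1 poly)"
  by (rule poly_eqI) simp
lemma ip_pCons: "ip (pCons a A) = pCons (of_int a) (ip A :: 'b::comm_ring_1 poly)"
  by (rule poly_eqI) (simp add: coeff_pCons split: nat.split)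
lemma ip_sum: "ip (\<Sum>i\<in>SS. f i) = (\<Sum>i\<in>SS. ip (f i) :: 'b::comm_ring_1 poly)"
  by (induction SS rule: infinite_finite_induct) (auto simp: ip_add)
lemma ip_prod: "ip (\<Prod>i\<in>SS. f i) = (\<Prod>i\<in>SS. ip (f i) :: 'b::comm_ring_1 poly)"
  by (induction SS rule: infinite_finite_induct) (auto simp: ip_mult)
lemma poly_ip_of_int: "poly (ip A) (of_int y :: 'b::comm_ring_1) = of_int (poly A y)"
  by (induction A) (simp_all add: ip_pCons)

definition Phi :: "nat \<Rightarrow> int poly" where "Phi n = (\<Sum>j<n. monom 1 j)"

lemma coeff_Phi: "coeff (Phi n) i = (if i < n then 1 else 0)"
  by (simp add: Phi_def coeff_sum coeff_monom)

lemma poly_ip_Phi: "poly (ip (Phi n)) w = (\<Sum>j<n. w ^ j)"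
  by (simp add: Phi_def ip_sum poly_sum poly_monom)

lemma poly_Phi_1: "poly (Phi n) 1 = int n"
  by (simp add: Phi_def poly_sum poly_monom)

lemma degree_Phi: assumes "n > 0" shows "degree (Phi n) = n - 1"
proof (rule antisym)
  show "degree (Phi n) \<le> n - 1" by (rule degree_le) (auto simp: coeff_Phi)
  show "n - 1 \<le> degree (Phi n)" by (rule le_degree) (use assms in \<open>simp add: coeff_Phi\<close>)
qed

lemma lead_Phi: "n > 0 \<Longrightarrow> lead_coeff (Phi n) = 1"
  by (simp add: degree_Phi coeff_Phi)

lemma Phi_nz: assumes "n > 0" shows "Phi n \<noteq> 0"
proof
  assume "Phi n = 0"
  then have "lead_coeff (Phi n) = 0" by simp
  with lead_Phi[OF assms] show False by simp
qed



context fq begin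

lemma ev_Phi_zeta: assumes "\<not> p dvd t" shows "poly (ip (Phi p)) (z ^ t) = 0"
proof -
  have ne: "z ^ t \<noteq> 1" using assms by (simp add: zeta_pow_eq_1_iff)
  have "(z ^ t) ^ p = 1" by (simp add: power_mult[symmetric] mult.commute[of t] power_mult)
  then show ?thesis using ne by (simp add: poly_ip_Phi geometric_sum)
qed

lemma ip_Phi_char: "(ip (Phi p) :: 'a poly) = [:-1, 1:] ^ (p - 1)"
proof -
  define X1 :: "'a poly" where "X1 = [:-1, 1:]"
  have X1: "X1 = monom 1 1 - 1" by (rule poly_eqI) (simp add: X1_def coeff_monom coeff_pCons coeff_1 split: nat.split)
  have "X1 * monom 1 j = monom 1 (Suc j) - monom 1 j" for j
    by (simp add: X1 algebra_simps mult_monom)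
  then have "X1 * ip (Phi p) = (\<Sum>j<p. monom 1 (Suc j) - monom 1 j)"
    by (simp add: Phi_def ip_sum sum_distrib_left)
  also have "\<dots> = monom 1 p - monom 1 0" by (rule sum_lessThan_telescope)
  also have "\<dots> = monom 1 p - 1" by simp
  finally have a: "X1 * ip (Phi p) = monom 1 p - 1" .
  have cp: "prime CHAR('a poly)" using prime_p char_p by simp
  have "X1 ^ p = (monom 1 1 + (-1)) ^ p" by (simp add: X1)
  also have "\<dots> = monom 1 1 ^ p + (-1) ^ p"
    by (rule freshmans_dream) (simp_all only: semiring_char_poly char_p prime_p)
  also have "(-1 :: 'a poly) ^ p = - 1"
    using minus_power_prime_CHAR[of p "1::'a poly"] by (simp only: semiring_char_poly char_p prime_p power_one simp_thms)
  also have "monom (1::'a) 1 ^ p = monom 1 p" by (simp add: monom_power)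
  finally have b: "X1 ^ p = monom 1 p - 1" by simp
  obtain n where pn: "p = Suc n" using p_pos by (cases p) auto
  have "X1 * X1 ^ (p - 1) = X1 ^ p" by (simp add: pn)
  then have "X1 * ip (Phi p) = X1 * X1 ^ (p - 1)" using a b by simp
  moreover have "X1 \<noteq> 0" by (simp add: X1_def)
  ultimately show ?thesis unfolding X1_def[symmetric] by simp
qed

lemma Phi_no_factor:
  assumes fac: "Phi p = B * C" and dB: "degree B \<ge> 1" and dC: "degree C \<ge> 1"
  shows False
proof -
  define Bp :: "'a poly" where "Bp = ip B"
  define Cp :: "'a poly" where "Cp = ip C"
  have prod: "Bp * Cp = [:-1, 1:] ^ (p - 1)"
    using ip_Phi_char by (simp add: Bp_def Cp_def fac ip_mult)
  have nz: "Bp * Cp \<noteq> 0" by (simp add: prod)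
  then have Bp0: "Bp \<noteq> 0" and Cp0: "Cp \<noteq> 0" by auto
  have "degree Bp + degree Cp = p - 1"
    using prod degree_mult_eq[OF Bp0 Cp0] by (simp add: degree_linear_power)
  moreover have "degree B + degree C = p - 1"
    using fac degree_Phi[OF p_pos] Phi_nz[OF p_pos] by (metis degree_mult_eq mult_eq_0_iff)
  moreover have "degree Bp \<le> degree B" "degree Cp \<le> degree C"
    by (simp_all add: Bp_def Cp_def ip_def map_poly_degree_leq)
  ultimately have dBp: "degree Bp = degree B" and dCp: "degree Cp = degree C" by linarith+
  have ord: "order 1 Bp + order 1 Cp = p - 1"
    using order_mult[OF nz, of 1] prod order_power_n_n[of "1::'a" "p-1"] by simp
  have "order 1 Cp \<le> degree Cp" "order 1 Bp \<le> degree Bp"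
    using order_degree[OF Cp0] order_degree[OF Bp0] by auto
  then have "order 1 Bp \<noteq> 0" "order 1 Cp \<noteq> 0"
    using ord dB dC \<open>degree B + degree C = p - 1\<close> dBp dCp by linarith+
  then have "poly Bp 1 = 0" "poly Cp 1 = 0" using order_root by blast+
  then have "(of_int (poly B 1) :: 'a) = 0" "(of_int (poly C 1) :: 'a) = 0"
    unfolding Bp_def Cp_def using poly_ip_of_int[of _ 1] by (metis of_int_1)+
  then have "int p dvd poly B 1" "int p dvd poly C 1"
    using of_int_eq_0_iff_char_dvd char_p by blast+
  then have "int p * int p dvd poly B 1 * poly C 1" by (rule mult_dvd_mono)
  also have "poly B 1 * poly C 1 = int p" using fac poly_Phi_1[of p] by simp
  finally have "int p * int p \<le> int p" using p_pos by (intro zdvd_imp_le) auto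
  then show False using p_gt1 by (simp add: mult_le_cancel_left1)
qed

lemma ev_Phi_z: "poly (ip (Phi p)) z = 0"
  using ev_Phi_zeta[of 1] p_gt1 by simp

lemma content_Phi: "content (Phi p) = 1"
proof -
  have "content (Phi p) dvd coeff (Phi p) 0" by (rule content_dvd_coeff)
  then have "is_unit (content (Phi p))" by (simp add: coeff_Phi)
  then have "normalize (content (Phi p)) = 1" by (rule is_unit_normalize)
  then show ?thesis by (simp only: normalize_content)
qed

lemma key_dvd:
  assumes A: "poly (ip A) z = 0"
  shows "\<exists>Q. A = Phi p * Q"
proof -
  define I where "I = {B::int poly. B \<noteq> 0 \<and> poly (ip B) z = 0}"
  have PhiI: "Phi p \<in> I" using ev_Phi_z Phi_nz[OF p_pos] by (simp add: I_def)
  define d where "d = (LEAST n. \<exists>B\<in>I. degree B = n)"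
  obtain B0 where B0: "B0 \<in> I" "degree B0 = d"
    using LeastI_ex[of "\<lambda>n. \<exists>B\<in>I. degree B = n"] PhiI unfolding d_def by blast
  have dmin: "d \<le> degree B" if "B \<in> I" for B unfolding d_def by (rule Least_le) (use that in auto)
  have degPhi: "degree (Phi p) = p - 1" using degree_Phi[OF p_pos] .
  have dle: "d \<le> p - 1" using dmin[OF PhiI] degPhi by simp
  have dval: "d = p - 1"
  proof (rule ccontr)
    assume "d \<noteq> p - 1" then have dlt: "d < p - 1" using dle by simp
    define B where "B = primitive_part B0"
    have B0nz: "B0 \<noteq> 0" using B0 by (simp add: I_def)
    have Bnz: "B \<noteq> 0" by (simp add: B_def B0nz)
    have cB: "content B = 1" using B0nz by (simp add: B_def)
    have dB: "degree B = d" using B0 by (simp add: B_def)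
    have "B0 = smult (content B0) B" by (simp add: B_def)
    then have "poly (ip B0) z = of_int (content B0) * poly (ip B) z"
      by (metis ip_smult poly_smult)
    then have evB: "poly (ip B) z = 0" using B0 B0nz by (simp add: I_def)
    obtain Q R where qr: "pseudo_divmod (Phi p) B = (Q, R)" by (cases "pseudo_divmod (Phi p) B")
    define L where "L = coeff B (degree B) ^ (Suc (degree (Phi p)) - degree B)"
    have eq: "smult L (Phi p) = B * Q + R" and rr: "R = 0 \<or> degree R < degree B"
      using pseudo_divmod[OF Bnz qr] by (simp_all add: L_def)
    have R0: "R = 0"
    proof (rule ccontr)
      assume Rnz: "R \<noteq> 0"
      have "R = smult L (Phi p) - B * Q" using eq by simp
      then have "poly (ip R) z = poly (ip (smult L (Phi p))) z - poly (ip B) z * poly (ip Q) z"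
        by (simp add: ip_diff ip_mult)
      also have "\<dots> = 0" by (simp add: ip_smult ev_Phi_z evB)
      finally have "R \<in> I" using Rnz by (simp add: I_def)
      then have "d \<le> degree R" by (rule dmin)
      with rr Rnz dB show False by simp
    qed
    with eq have eq2: "smult L (Phi p) = B * Q" by simp
    have L0: "L \<noteq> 0" using Bnz by (simp add: L_def)
    have "content (smult L (Phi p)) = normalize L" by (simp add: content_Phi)
    moreover have "content (B * Q) = content Q" by (simp add: content_mult cB)
    ultimately have cQ: "content Q = \<bar>L\<bar>" using eq2 by simp
    define Q' where "Q' = primitive_part Q"
    have "Q = smult \<bar>L\<bar> Q'" using content_times_primitive_part[of Q] cQ by (simp add: Q'_def)
    then have "smult L (Phi p) = smult \<bar>L\<bar> (B * Q')" using eq2 by simp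
    also have "\<bar>L\<bar> = L * sgn L" using L0 by (cases "L > 0") auto
    also have "smult (L * sgn L) (B * Q') = smult L (B * smult (sgn L) Q')" by simp
    finally have fac: "Phi p = B * smult (sgn L) Q'" using smult_cancel[OF L0] by blast
    have dB1: "degree B \<ge> 1"
    proof (rule ccontr)
      assume "\<not> degree B \<ge> 1"
      then have "degree B = 0" by simp
      then obtain c where c: "B = [:c:]" by (elim degree_eq_zeroE)
      then have "c \<noteq> 0" using Bnz by simp
      moreover have "poly (ip B) z = of_int c" by (simp add: c ip_pCons)
      ultimately show False using evB by simp
    qed
    have Q'nz: "smult (sgn L) Q' \<noteq> 0" using fac Phi_nz[OF p_pos] by auto
    have "degree (Phi p) = degree B + degree (smult (sgn L) Q')"
      using fac degree_mult_eq[OF Bnz Q'nz] by simp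
    then have "degree (smult (sgn L) Q') \<ge> 1" using dB dlt degPhi by simp
    then show False using Phi_no_factor[OF fac dB1] by blast
  qed
  obtain Q R where qr: "pseudo_divmod A (Phi p) = (Q, R)" by (cases "pseudo_divmod A (Phi p)")
  have eq: "smult (coeff (Phi p) (degree (Phi p)) ^ (Suc (degree A) - degree (Phi p))) A = Phi p * Q + R"
    and rr: "R = 0 \<or> degree R < degree (Phi p)"
    using pseudo_divmod[OF Phi_nz[OF p_pos] qr] by simp_all
  then have eq: "A = Phi p * Q + R" using lead_Phi[OF p_pos] by simp
  have "R = 0"
  proof (rule ccontr)
    assume Rnz: "R \<noteq> 0"
    have "R = A - Phi p * Q" using eq by simp
    then have "poly (ip R) z = poly (ip A) z - poly (ip (Phi p)) z * poly (ip Q) z"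
      by (simp add: ip_diff ip_mult)
    also have "\<dots> = 0" by (simp add: A ev_Phi_z)
    finally have "R \<in> I" using Rnz by (simp add: I_def)
    then have "d \<le> degree R" by (rule dmin)
    with rr Rnz dval degPhi show False by simp
  qed
  with eq show ?thesis by (intro exI[of _ Q]) simp
qed

lemma key:
  assumes "poly (ip A) z = 0" and "\<not> p dvd t"
  shows "poly (ip A) (z ^ t) = 0"
proof -
  obtain Q where "A = Phi p * Q" using key_dvd[OF assms(1)] by blast
  then show ?thesis using ev_Phi_zeta[OF assms(2)] by (simp add: ip_mult)
qed

end


lemma ip_uminus: "ip (- A) = (- ip A :: 'b::comm_ring_1 poly)"
  by (rule poly_eqI) simp

lemma coeff_prod_linear_ip:
  fixes P :: "'b \<Rightarrow> int poly"
  assumes "finite M"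
  shows "\<exists>R. \<forall>(w::complex) i. coeff (\<Prod>m\<in>M. [:- poly (ip (P m)) w, 1:]) i = poly (ip (R i)) w"
  using assms
proof (induction M rule: finite_induct)
  case empty
  show ?case by (intro exI[of _ "\<lambda>i. if i = 0 then 1 else 0"]) (auto simp: coeff_1)
next
  case (insert x M)
  then obtain R where R: "\<And>(w::complex) i. coeff (\<Prod>m\<in>M. [:- poly (ip (P m)) w, 1:]) i = poly (ip (R i)) w" by auto
  define R' where "R' i = (case i of 0 \<Rightarrow> 0 | Suc j \<Rightarrow> R j) - P x * R i" for i
  have "coeff (\<Prod>m\<in>insert x M. [:- poly (ip (P m)) w, 1:]) i = poly (ip (R' i)) w" for w :: complex and i
  proof -
    define Pr where "Pr = (\<Prod>m\<in>M. [:- poly (ip (P m)) w, 1:])"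
    have c: "coeff Pr j = poly (ip (R j)) w" for j unfolding Pr_def by (rule R)
    have "(\<Prod>m\<in>insert x M. [:- poly (ip (P m)) w, 1:]) = [:- poly (ip (P x)) w, 1:] * Pr"
      using insert by (simp add: Pr_def)
    also have "\<dots> = smult (- poly (ip (P x)) w) Pr + pCons 0 Pr"
      by (simp add: mult_pCons_left)
    finally have e: "(\<Prod>m\<in>insert x M. [:- poly (ip (P m)) w, 1:]) = smult (- poly (ip (P x)) w) Pr + pCons 0 Pr" .
    show ?thesis unfolding e
      by (cases i) (simp_all add: c R'_def ip_diff ip_mult ip_uminus coeff_pCons)
  qed
  then show ?case by blast
qed

lemma coeff_prod_linear_ipE:
  fixes P :: "'b \<Rightarrow> int poly"
  assumes "finite M"
  obtains R where "\<And>(w::complex) i. coeff (\<Prod>m\<in>M. [:- poly (ip (P m)) w, 1:]) i = poly (ip (R i)) w"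
proof -
  from coeff_prod_linear_ip[OF assms, of P] obtain R where
    "\<forall>(w::complex) i. coeff (\<Prod>m\<in>M. [:- poly (ip (P m)) w, 1:]) i = poly (ip (R i)) w" by (elim exE)
  then show ?thesis using that by blast
qed

context fq begin

definition Pm :: "'a poly \<Rightarrow> 'a \<Rightarrow> int poly" where
  "Pm f m = (\<Sum>x\<in>UNIV. monom 1 (tr_nat p k (m * poly f x)))"

lemma poly_Pm: "poly (ip (Pm f m)) (z ^ t) = S p k f (of_nat t * m)"
proof -
  have "poly (ip (Pm f m)) (z ^ t) = (\<Sum>x\<in>UNIV. (z ^ t) ^ tr_nat p k (m * poly f x))"
    by (simp add: Pm_def ip_sum poly_sum poly_monom)
  also have "\<dots> = (\<Sum>x\<in>UNIV. psi p k (of_nat t * (m * poly f x)))"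
    by (simp add: psi_scal power_mult)
  finally show ?thesis by (simp add: S_def mult_ac)
qed

lemma poly_Pm1: "poly (ip (Pm f m)) z = S p k f m"
  using poly_Pm[of f m 1] by simp

lemma inv_mod:
  assumes "\<not> p dvd t"
  shows "(of_nat (t ^ (p - 2)) :: 'a) * of_nat t = 1" and "\<not> p dvd t ^ (p - 2)"
proof -
  have t0: "(of_nat t :: 'a) \<noteq> 0" using assms of_nat_eq_0_iff_char_dvd[of t, where 'a='a] char_p by simp
  have "(of_nat t :: 'a) * of_nat t ^ (p - 1) = of_nat t * 1"
    using of_nat_pow_p[of t] p_pos by (metis Suc_diff_1 mult.right_neutral power_Suc)
  then have e: "(of_nat t :: 'a) ^ (p - 1) = 1" using t0 by (metis mult_left_cancel)
  have "p - 1 = Suc (p - 2)" using p_gt1 by simp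
  then show i: "(of_nat (t ^ (p - 2)) :: 'a) * of_nat t = 1" using e by (simp add: mult.commute)
  show "\<not> p dvd t ^ (p - 2)"
  proof
    assume "p dvd t ^ (p - 2)"
    then have "(of_nat (t ^ (p - 2)) :: 'a) = 0" using of_nat_eq_0_iff_char_dvd[of "t ^ (p-2)", where 'a='a] char_p by simp
    with i show False by simp
  qed
qed

lemma S_conj_eq:
  fixes f :: "'a poly"
  assumes "\<not> p dvd t" and "S p k f (of_nat t * m) = S p k f (of_nat t * m')"
  shows "S p k f m = S p k f m'"
proof -
  define A where "A = Pm f (of_nat t * m) - Pm f (of_nat t * m')"
  have "poly (ip A) z = 0" using assms(2) by (simp add: A_def ip_diff poly_Pm1)
  then have "poly (ip A) (z ^ (t ^ (p - 2))) = 0" using key inv_mod(2)[OF assms(1)] by blast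
  then show ?thesis using inv_mod(1)[OF assms(1)]
    by (simp add: A_def ip_diff poly_Pm mult.assoc[symmetric])
qed

lemma S_conj_nz:
  fixes f :: "'a poly"
  assumes "\<not> p dvd t" and "S p k f m \<noteq> 0"
  shows "S p k f (of_nat t * m) \<noteq> 0"
proof
  assume "S p k f (of_nat t * m) = 0"
  then have "poly (ip (Pm f (of_nat t * m))) z = 0" by (simp add: poly_Pm1)
  then have "poly (ip (Pm f (of_nat t * m))) (z ^ (t ^ (p - 2))) = 0" using key inv_mod(2)[OF assms(1)] by blast
  then have "S p k f m = 0" using inv_mod(1)[OF assms(1)] by (simp add: poly_Pm mult.assoc[symmetric])
  with assms(2) show False by simp
qed

lemma int_lemma:
  assumes "\<And>t. t \<in> {1..<p} \<Longrightarrow> poly (ip R) (z ^ t) = c"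
  shows "c \<in> \<int>"
proof -
  obtain Q R1 where qr: "pseudo_divmod R (Phi p) = (Q, R1)" by (cases "pseudo_divmod R (Phi p)")
  have eq: "smult (coeff (Phi p) (degree (Phi p)) ^ (Suc (degree R) - degree (Phi p))) R = Phi p * Q + R1"
    and rr: "R1 = 0 \<or> degree R1 < degree (Phi p)"
    using pseudo_divmod[OF Phi_nz[OF p_pos] qr] by simp_all
  then have eq: "R = Phi p * Q + R1" using lead_Phi[OF p_pos] by simp
  have degR1: "degree R1 \<le> p - 2" using rr degree_Phi[OF p_pos] by auto
  have ev1: "poly (ip R1) (z ^ t) = c" if "t \<in> {1..<p}" for t
  proof -
    have "\<not> p dvd t" using that by (auto dest: dvd_imp_le)
    then have "poly (ip (Phi p)) (z ^ t) = 0" by (rule ev_Phi_zeta)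
    moreover have "R1 = R - Phi p * Q" using eq by simp
    ultimately show ?thesis using assms[OF that] by (simp add: ip_diff ip_mult)
  qed
  define D :: "complex poly" where "D = ip R1 - [:c:]"
  have sub: "(\<lambda>t. z ^ t) ` {1..<p} \<subseteq> {x. poly D x = 0}" using ev1 by (auto simp: D_def)
  have inj: "inj_on (\<lambda>t. z ^ t) {1..<p}" by (auto simp: inj_on_def zeta_pow_eq_iff)
  have D0: "D = 0"
  proof (rule ccontr)
    assume Dnz: "D \<noteq> 0"
    have "p - 1 = card ((\<lambda>t. z ^ t) ` {1..<p})" using inj by (simp add: card_image)
    also have "\<dots> \<le> card {x. poly D x = 0}" using sub by (intro card_mono poly_roots_finite[OF Dnz])
    also have "\<dots> \<le> degree D" by (rule card_poly_roots_bound[OF Dnz])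
    also have "degree D \<le> max (degree (ip R1 :: complex poly)) (degree [:c:])"
      unfolding D_def by (rule degree_diff_le_max)
    also have "degree (ip R1 :: complex poly) \<le> degree R1" by (simp add: ip_def map_poly_degree_leq)
    finally show False using degR1 p_gt1 by simp
  qed
  then have "coeff (ip R1 :: complex poly) 0 = c" unfolding D_def by (metis coeff_pCons_0 eq_iff_diff_eq_0)
  then show ?thesis by (metis Ints_of_int coeff_ip)
qed

lemma Omega_eq: "Omega p k (f::'a poly) = S p k f ` {m. m \<noteq> 0 \<and> S p k f m \<noteq> 0}"
  by (auto simp: Omega_def)

lemma mpoly_int: "coeff (mpoly p k (f::'a poly)) i \<in> \<int>"
proof -
  define SS where "SS = {m::'a. m \<noteq> 0 \<and> S p k f m \<noteq> 0}"
  define g where "g l = (SOME m. m \<in> SS \<and> S p k f m = l)" for l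
  define M0 where "M0 = g ` Omega p k f"
  have g: "g l \<in> SS \<and> S p k f (g l) = l" if "l \<in> Omega p k f" for l
    unfolding g_def by (rule someI_ex) (use that in \<open>auto simp: Omega_def SS_def\<close>)
  have M0SS: "M0 \<subseteq> SS" using g by (auto simp: M0_def)
  have injS: "inj_on (S p k f) M0" using g by (auto simp: M0_def inj_on_def)
  have imS: "S p k f ` M0 = Omega p k f" using g by (force simp: M0_def image_iff)
  have fin: "finite M0" by simp
  have mp: "mpoly p k f = (\<Prod>m\<in>M0. [:- S p k f m, 1:])"
    unfolding mpoly_def imS[symmetric] by (simp add: prod.reindex[OF injS] o_def)
  have "\<exists>R. \<forall>(w::complex) i. coeff (\<Prod>m\<in>M0. [:- poly (ip (Pm f m)) w, 1:]) i = poly (ip (R i)) w"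
    by (rule coeff_prod_linear_ip[OF fin])
  then obtain R where R0: "\<forall>(w::complex) i. coeff (\<Prod>m\<in>M0. [:- poly (ip (Pm f m)) w, 1:]) i = poly (ip (R i)) w" ..
  have R: "coeff (\<Prod>m\<in>M0. [:- poly (ip (Pm f m)) w, 1:]) i = poly (ip (R i)) w" for w :: complex and i
    using R0 by blast
  have conj: "(\<Prod>m\<in>M0. [:- poly (ip (Pm f m)) (z ^ t), 1:]) = mpoly p k f" if t: "\<not> p dvd t" for t
  proof -
    define h where "h m = S p k f (of_nat t * m)" for m
    have injh: "inj_on h M0"
    proof (rule inj_onI)
      fix m m' assume "m \<in> M0" "m' \<in> M0" "h m = h m'"
      then have "S p k f (of_nat t * m) = S p k f (of_nat t * m')" by (simp add: h_def)
      then have "S p k f m = S p k f m'" by (rule S_conj_eq[OF t])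
      then show "m = m'" using injS \<open>m \<in> M0\<close> \<open>m' \<in> M0\<close> by (simp add: inj_on_def)
    qed
    have t0: "(of_nat t :: 'a) \<noteq> 0" using t of_nat_eq_0_iff_char_dvd[of t, where 'a='a] char_p by simp
    have "h m \<in> Omega p k f" if "m \<in> M0" for m
    proof -
      have "m \<noteq> 0" "S p k f m \<noteq> 0" using M0SS that by (auto simp: SS_def)
      then have "of_nat t * m \<noteq> 0" "S p k f (of_nat t * m) \<noteq> 0" using t0 S_conj_nz[OF t, where m=m] by auto
      then show ?thesis unfolding Omega_def h_def by blast
    qed
    then have "h ` M0 \<subseteq> Omega p k f" by auto
    moreover have "card (h ` M0) = card (Omega p k f)"
      using card_image[OF injh] card_image[OF injS] imS by simp
    moreover have "finite (Omega p k f)" by (simp add: Omega_eq)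
    ultimately have hM: "h ` M0 = Omega p k f" by (intro card_subset_eq) auto
    have "mpoly p k f = (\<Prod>m\<in>M0. [:- h m, 1:])"
      unfolding mpoly_def hM[symmetric] by (simp add: prod.reindex[OF injh] o_def)
    then show ?thesis by (simp add: poly_Pm h_def)
  qed
  have c1: "coeff (mpoly p k f) i = poly (ip (R i)) (z ^ t)" if "\<not> p dvd t" for t
  proof -
    have "coeff (mpoly p k f) i = coeff (\<Prod>m\<in>M0. [:- poly (ip (Pm f m)) (z ^ t), 1:]) i"
      using conj[OF that] by simp
    also have "\<dots> = poly (ip (R i)) (z ^ t)" by (rule R)
    finally show ?thesis .
  qed
  have "coeff (mpoly p k f) i = poly (ip (R i)) (z ^ t)" if "t \<in> {1..<p}" for t
    using that by (intro c1) (auto dest: dvd_imp_le)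
  then show ?thesis by (intro int_lemma[of "R i"]) simp
qed

end


lemma poly_altdef_le:
  fixes P :: "complex poly"
  assumes "degree P \<le> n"
  shows "poly P x = (\<Sum>i\<le>n. coeff P i * x ^ i)"
proof -
  have "poly P x = (\<Sum>i\<le>degree P. coeff P i * x ^ i)" by (rule poly_altdef)
  also have "\<dots> = (\<Sum>i\<le>n. coeff P i * x ^ i)"
    using assms by (intro sum.mono_neutral_left) (auto simp: coeff_eq_0)
  finally show ?thesis .
qed

context fq begin


lemma S_zero: "S p k (f::'a poly) 0 = of_nat (card (UNIV :: 'a set))"
  by (simp add: S_def)

lemma N_formula:
  fixes f :: "'a poly"
  shows "of_nat (card (UNIV :: 'a set)) * of_nat (N s f a) = (\<Sum>m\<in>UNIV. psi p k (- m * a) * S p k f m ^ s)"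
proof -
  define X where "X = {0..<s} \<rightarrow>\<^sub>E (UNIV :: 'a set)"
  have finX: "finite X" by (simp add: X_def finite_PiE)
  have "N s f a = card {x\<in>X. (\<Sum>i<s. poly f (x i)) = a}" by (simp add: N_def X_def)
  also have "\<dots> = (\<Sum>x\<in>{x\<in>X. (\<Sum>i<s. poly f (x i)) = a}. 1)" by (rule card_eq_sum)
  finally have "(of_nat (N s f a) :: complex) = (\<Sum>x\<in>{x\<in>X. (\<Sum>i<s. poly f (x i)) = a}. 1)" by simp
  also have "\<dots> = (\<Sum>x\<in>X. if (\<Sum>i<s. poly f (x i)) = a then 1 else 0)"
    by (rule sum.inter_filter[OF finX])
  finally have "(of_nat (N s f a) :: complex) = (\<Sum>x\<in>X. if (\<Sum>i<s. poly f (x i)) = a then 1 else 0)" .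
  then have "of_nat (card (UNIV :: 'a set)) * of_nat (N s f a) = (\<Sum>x\<in>X. (\<Sum>m\<in>UNIV. psi p k (m * ((\<Sum>i<s. poly f (x i)) - a))))"
    by (simp add: sum_distrib_left orth if_distrib cong: if_cong)
  also have "\<dots> = (\<Sum>x\<in>X. (\<Sum>m\<in>UNIV. psi p k (- m * a) * (\<Prod>i<s. psi p k (m * poly f (x i)))))"
  proof (intro sum.cong refl)
    fix x m
    have "psi p k (m * ((\<Sum>i<s. poly f (x i)) - a)) = psi p k (- m * a + (\<Sum>i<s. m * poly f (x i)))"
      by (rule arg_cong[where f="psi p k"]) (simp add: algebra_simps sum_distrib_left)
    also have "\<dots> = psi p k (- m * a) * psi p k (\<Sum>i<s. m * poly f (x i))" by (rule psi_add)
    also have "psi p k (\<Sum>i<s. m * poly f (x i)) = (\<Prod>i<s. psi p k (m * poly f (x i)))" by (rule psi_sum)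
    finally show "psi p k (m * ((\<Sum>i<s. poly f (x i)) - a)) = psi p k (- m * a) * (\<Prod>i<s. psi p k (m * poly f (x i)))" .
  qed
  also have "\<dots> = (\<Sum>m\<in>UNIV. psi p k (- m * a) * (\<Sum>x\<in>X. (\<Prod>i<s. psi p k (m * poly f (x i)))))"
    by (subst sum.swap) (simp add: sum_distrib_left)
  also have "\<dots> = (\<Sum>m\<in>UNIV. psi p k (- m * a) * S p k f m ^ s)"
  proof (intro sum.cong refl arg_cong2[where f="(*)"])
    fix m
    have "(\<Prod>i\<in>{0..<s}. \<Sum>y\<in>UNIV. psi p k (m * poly f y)) = (\<Sum>x\<in>X. \<Prod>i\<in>{0..<s}. psi p k (m * poly f (x i)))"
      unfolding X_def by (rule prod_sum_PiE) auto
    then show "(\<Sum>x\<in>X. \<Prod>i<s. psi p k (m * poly f (x i))) = S p k f m ^ s"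
      by (simp add: S_def atLeast0LessThan)
  qed
  finally show ?thesis .
qed

definition SS :: "'a poly \<Rightarrow> 'a set" where "SS f = {m. m \<noteq> 0 \<and> S p k f m \<noteq> 0}"

lemma u_formula:
  fixes f :: "'a poly"
  assumes "s \<ge> 1"
  shows "(of_int (u s f a) :: complex) = (\<Sum>m\<in>SS f. psi p k (- m * a) * S p k f m ^ s) / of_nat (card (UNIV :: 'a set))"
proof -
  have q0: "(of_nat (card (UNIV :: 'a set)) :: complex) \<noteq> 0" by simp
  have "(\<Sum>m\<in>UNIV. psi p k (- m * a) * S p k f m ^ s) =
        psi p k (- 0 * a) * S p k f 0 ^ s + (\<Sum>m\<in>UNIV - {0}. psi p k (- m * a) * S p k f m ^ s)"
    by (subst sum.remove[of _ 0]) auto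
  also have "(\<Sum>m\<in>UNIV - {0}. psi p k (- m * a) * S p k f m ^ s) = (\<Sum>m\<in>SS f. psi p k (- m * a) * S p k f m ^ s)"
    using assms by (intro sum.mono_neutral_right) (auto simp: SS_def)
  finally have e: "of_nat (card (UNIV :: 'a set)) * of_nat (N s f a) = of_nat (card (UNIV :: 'a set)) ^ s + (\<Sum>m\<in>SS f. psi p k (- m * a) * S p k f m ^ s)"
    by (simp add: N_formula S_zero)
  have "of_nat (card (UNIV :: 'a set)) ^ s = of_nat (card (UNIV :: 'a set)) * (of_nat (card (UNIV :: 'a set)) ^ (s - 1) :: complex)"
    using assms by (metis Suc_diff_le diff_Suc_1 power_Suc)
  then have "(of_int (u s f a) :: complex) = (of_nat (card (UNIV :: 'a set)) * of_nat (N s f a) - of_nat (card (UNIV :: 'a set)) ^ s) / of_nat (card (UNIV :: 'a set))"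
    using q0 by (simp add: u_def field_simps)
  then show ?thesis using e by simp
qed

lemma poly_mpoly_S:
  fixes f :: "'a poly"
  assumes "m \<in> SS f"
  shows "poly (mpoly p k f) (S p k f m) = 0"
proof -
  have "S p k f m \<in> Omega p k f" using assms by (auto simp: SS_def Omega_def)
  moreover have "finite (Omega p k f)" by (simp add: Omega_eq)
  ultimately show ?thesis by (auto simp: mpoly_def poly_prod intro!: bexI[of _ "S p k f m"])
qed

lemma rec_sum:
  fixes f :: "'a poly" and g :: "int poly"
  shows "(of_int (\<Sum>i\<le>degree g. coeff g i * u (j + i + 1) f a) :: complex) =
     (\<Sum>m\<in>SS f. psi p k (- m * a) * S p k f m ^ (j + 1) * poly (ip g) (S p k f m)) / of_nat (card (UNIV :: 'a set))"
proof -
  have "(of_int (\<Sum>i\<le>degree g. coeff g i * u (j + i + 1) f a) :: complex) =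
      (\<Sum>i\<le>degree g. of_int (coeff g i) * ((\<Sum>m\<in>SS f. psi p k (- m * a) * S p k f m ^ (j + i + 1)) / of_nat (card (UNIV :: 'a set))))"
    by (simp add: u_formula)
  also have "\<dots> = (\<Sum>m\<in>SS f. psi p k (- m * a) * S p k f m ^ (j + 1) *
                     (\<Sum>i\<le>degree g. of_int (coeff g i) * S p k f m ^ i)) / of_nat (card (UNIV :: 'a set))"
    by (simp add: sum_divide_distrib sum_distrib_left sum_distrib_right power_add mult_ac sum.swap[of _ "SS f"])
  also have "(\<lambda>m. (\<Sum>i\<le>degree g. of_int (coeff g i) * S p k f m ^ i)) = (\<lambda>m. poly (ip g) (S p k f m))"
  proof
    fix m
    have "poly (ip g) (S p k f m) = (\<Sum>i\<le>degree g. coeff (ip g) i * S p k f m ^ i)"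
      by (rule poly_altdef_le) (simp add: ip_def map_poly_degree_leq)
    then show "(\<Sum>i\<le>degree g. of_int (coeff g i) * S p k f m ^ i) = poly (ip g) (S p k f m)" by simp
  qed
  finally show ?thesis by simp
qed

end


context fq begin

lemma mpoly_nz: "mpoly p k (f::'a poly) \<noteq> 0"
  by (simp add: mpoly_def Omega_eq)

lemma ip_inj: "(ip g :: complex poly) = 0 \<Longrightarrow> g = 0"
  by (metis coeff_ip of_int_eq_0_iff poly_eqI coeff_0)

lemma gen:
  fixes f :: "'a poly"
  assumes G: "ip G = mpoly p k f"
  shows "gen_poly G (\<lambda>s. u s f a)"
  unfolding gen_poly_def
proof (intro conjI allI)
  show "G \<noteq> 0" using G mpoly_nz[of f] by auto
  fix j
  have "(of_int (\<Sum>i\<le>degree G. coeff G i * u (j + i + 1) f a) :: complex) = 0"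
    unfolding rec_sum by (simp add: G poly_mpoly_S)
  then show "(\<Sum>i\<le>degree G. coeff G i * u (j + i + 1) f a) = 0" by (simp only: of_int_eq_0_iff)
qed

lemma degree_mpoly: "degree (mpoly p k (f::'a poly)) = card (Omega p k f)"
proof -
  have "degree (mpoly p k f) = (\<Sum>c\<in>Omega p k f. degree [:- c, 1:])"
    unfolding mpoly_def by (rule degree_prod_eq_sum_degree) auto
  then show ?thesis by simp
qed

lemma lead_mpoly: "lead_coeff (mpoly p k (f::'a poly)) = 1"
  by (simp add: mpoly_def lead_coeff_prod)

lemma degree_ip: "degree (ip G :: complex poly) = degree G"
  unfolding ip_def by (rule degree_map_poly) simp

lemma minpoly:
  fixes f :: "'a poly"
  assumes G: "ip G = mpoly p k f"
  shows "min_poly_seq G (\<lambda>s. u s f 0)"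
  unfolding min_poly_seq_def
proof (intro conjI allI impI)
  show "gen_poly G (\<lambda>s. u s f 0)" by (rule gen[OF G])
  have "(of_int (lead_coeff G) :: complex) = lead_coeff (ip G :: complex poly)"
    by (simp add: degree_ip)
  also have "\<dots> = 1" by (simp add: G lead_mpoly)
  finally have "lead_coeff G = 1" by simp
  then have "content G dvd 1" by (metis content_dvd_coeff)
  then have "normalize (content G) = 1" by (rule is_unit_normalize)
  then show "content G = 1" by (simp only: normalize_content)
  fix g assume gg: "gen_poly g (\<lambda>s. u s f 0)"
  define gc :: "complex poly" where "gc = ip g"
  have g0: "g \<noteq> 0" using gg by (simp add: gen_poly_def)
  have gc0: "gc \<noteq> 0" using ip_inj g0 by (auto simp: gc_def)
  have recz: "(\<Sum>m\<in>SS f. S p k f m ^ (j + 1) * poly gc (S p k f m)) = 0" for j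
  proof -
    have "(\<Sum>i\<le>degree g. coeff g i * u (j + i + 1) f 0) = 0" using gg by (simp add: gen_poly_def)
    then have "(of_int (\<Sum>i\<le>degree g. coeff g i * u (j + i + 1) f 0) :: complex) = 0" by simp
    then show ?thesis unfolding rec_sum by (simp add: gc_def)
  qed
  have root: "poly gc \<mu> = 0" if mu: "\<mu> \<in> Omega p k f" for \<mu>
  proof -
    define Q where "Q = (\<Prod>l\<in>Omega p k f - {\<mu>}. [:- l, 1:])"
    have finO: "finite (Omega p k f)" by (simp add: Omega_eq)
    have "0 = (\<Sum>i\<le>degree Q. coeff Q i * (\<Sum>m\<in>SS f. S p k f m ^ (i + 1) * poly gc (S p k f m)))"
      by (simp only: recz mult_zero_right sum.neutral_const)
    also have "\<dots> = (\<Sum>m\<in>SS f. S p k f m * poly gc (S p k f m) * (\<Sum>i\<le>degree Q. coeff Q i * S p k f m ^ i))"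
      by (simp add: sum_distrib_left sum_distrib_right mult_ac sum.swap[of _ "SS f"])
    also have "\<dots> = (\<Sum>m\<in>SS f. S p k f m * poly gc (S p k f m) * poly Q (S p k f m))"
      by (simp add: poly_altdef)
    also have "\<dots> = (\<Sum>m\<in>{m\<in>SS f. S p k f m = \<mu>}. \<mu> * poly gc \<mu> * poly Q \<mu>)"
    proof (rule sum.mono_neutral_cong_right)
      show "\<forall>m\<in>SS f - {m \<in> SS f. S p k f m = \<mu>}. S p k f m * poly gc (S p k f m) * poly Q (S p k f m) = 0"
      proof
        fix m assume "m \<in> SS f - {m \<in> SS f. S p k f m = \<mu>}"
        then have "S p k f m \<in> Omega p k f - {\<mu>}" by (auto simp: SS_def Omega_def)
        then have "poly Q (S p k f m) = 0" using finO by (auto simp: Q_def poly_prod)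
        then show "S p k f m * poly gc (S p k f m) * poly Q (S p k f m) = 0" by simp
      qed
    qed (auto simp: SS_def)
    also have "\<dots> = of_nat (card {m\<in>SS f. S p k f m = \<mu>}) * (\<mu> * poly gc \<mu> * poly Q \<mu>)" by simp
    finally have z: "of_nat (card {m\<in>SS f. S p k f m = \<mu>}) * (\<mu> * poly gc \<mu> * poly Q \<mu>) = 0" by simp
    obtain m0 where m0: "m0 \<in> SS f" "S p k f m0 = \<mu>" using mu by (auto simp: Omega_def SS_def)
    have "card {m\<in>SS f. S p k f m = \<mu>} \<noteq> 0" using m0 by (auto simp: card_eq_0_iff)
    then have c0: "(of_nat (card {m\<in>SS f. S p k f m = \<mu>}) :: complex) \<noteq> 0" by (simp only: of_nat_eq_0_iff not_False_eq_True)
    moreover have "\<mu> \<noteq> 0" using mu by (auto simp: Omega_def)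
    moreover have "poly Q \<mu> \<noteq> 0" using finO by (simp add: Q_def poly_prod)
    ultimately show ?thesis using z by (simp only: mult_eq_0_iff) blast
  qed
  have "degree G = card (Omega p k f)" using degree_ip[of G] G degree_mpoly[of f] by simp
  also have "\<dots> \<le> card {x. poly gc x = 0}"
    using root by (intro card_mono poly_roots_finite[OF gc0]) auto
  also have "\<dots> \<le> degree gc" by (rule card_poly_roots_bound[OF gc0])
  also have "\<dots> = degree g" by (simp add: gc_def degree_ip)
  finally show "degree G \<le> degree g" .
qed

end


lemma inv_geo: "inverse (1 - fps_const (c::complex) * fps_X) = Abs_fps (\<lambda>n. c ^ n)"
proof (rule fps_inverse_unique)
  show "(1 - fps_const c * fps_X) * Abs_fps (\<lambda>n. c ^ n) = 1"
  proof (rule fps_ext)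
    fix n show "((1 - fps_const c * fps_X) * Abs_fps (\<lambda>n. c ^ n)) $ n = (1 :: complex fps) $ n"
      by (cases n) (simp_all add: algebra_simps mult.assoc)
  qed
qed

lemma geo: "fps_X / (1 - fps_const (c::complex) * fps_X) = Abs_fps (\<lambda>n. if n = 0 then 0 else c ^ (n - 1))"
proof -
  have "fps_X / (1 - fps_const c * fps_X) = fps_X * inverse (1 - fps_const c * fps_X)"
    by (rule fps_divide_unit) simp
  also have "\<dots> = Abs_fps (\<lambda>n. if n = 0 then 0 else c ^ (n - 1))"
    by (rule fps_ext) (simp add: inv_geo)
  finally show ?thesis .
qed

context fq begin

lemma Mt0: "Mt p k (f::'a poly) 0 = pderiv (Mf p k f)"
proof -
  have idx: "{m. m \<noteq> 0 \<and> m \<noteq> n \<and> S p k f m \<noteq> 0} = {m. m \<noteq> 0 \<and> S p k f m \<noteq> 0} - {n}" for n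
    by auto
  have d: "pderiv [:c, 1:] = (1::complex poly)" for c by (simp add: pderiv_pCons)
  show ?thesis unfolding Mt_def Mf_def pderiv_prod by (simp add: idx d)
qed

definition L :: "'a poly \<Rightarrow> 'a \<Rightarrow> complex fps" where
  "L f m = fps_of_poly [:- 1 / S p k f m, 1:]"

lemma L_eq:
  assumes "S p k f m \<noteq> 0"
  shows "L f m = fps_const (- 1 / S p k f m) * (1 - fps_const (S p k f m) * fps_X)"
  by (rule fps_ext) (use assms in \<open>simp add: L_def fps_of_poly_linear algebra_simps\<close>)

lemma L0: "S p k f m \<noteq> 0 \<Longrightarrow> L f m $ 0 \<noteq> 0"
  by (simp add: L_def)

lemma X_inv_L:
  assumes "S p k f m \<noteq> 0"
  shows "fps_X * inverse (L f m) = Abs_fps (\<lambda>j. if j = 0 then 0 else - (S p k f m ^ j))"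
proof -
  have "inverse (L f m) = fps_const (- S p k f m) * Abs_fps (\<lambda>n. S p k f m ^ n)"
    using assms by (simp add: L_eq fps_inverse_mult fps_const_inverse inv_geo)
  then show ?thesis
  proof (intro fps_ext)
    fix j assume "inverse (L f m) = fps_const (- S p k f m) * Abs_fps (\<lambda>n. S p k f m ^ n)"
    then show "(fps_X * inverse (L f m)) $ j = Abs_fps (\<lambda>j. if j = 0 then 0 else - (S p k f m ^ j)) $ j"
      by (cases j) simp_all
  qed
qed

lemma fps_main:
  fixes f :: "'a poly"
  shows "Abs_fps (\<lambda>s. if s = 0 then 0 else of_nat (N s f a)) =
           fps_X / (1 - of_nat (card (UNIV::'a set)) * fps_X)
           - fps_X * fps_of_poly (Mt p k f a)
               / (of_nat (card (UNIV::'a set)) * fps_of_poly (Mf p k f))"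
proof -
  define q where "q = card (UNIV :: 'a set)"
  define e where "e n = psi p k (- n * a)" for n
  define D where "D = fps_of_poly (Mf p k f)"
  define T where "T = fps_of_poly (Mt p k f a)"
  have SSd: "SS f = {m. m \<noteq> 0 \<and> S p k f m \<noteq> 0}" by (simp add: SS_def)
  have idx: "{m. m \<noteq> 0 \<and> m \<noteq> n \<and> S p k f m \<noteq> 0} = SS f - {n}" for n by (auto simp: SS_def)
  have D: "D = (\<Prod>m\<in>SS f. L f m)" by (simp add: D_def Mf_def L_def fps_of_poly_prod SSd)
  have D0: "D $ 0 \<noteq> 0"
  proof -
    have "D $ 0 = poly (Mf p k f) 0" by (simp add: D_def poly_0_coeff_0)
    also have "\<dots> \<noteq> 0" by (simp add: Mf_def poly_prod)
    finally show ?thesis .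
  qed
  have T: "T = (\<Sum>n\<in>SS f. fps_const (e n) * (\<Prod>m\<in>SS f - {n}. L f m))"
    by (simp add: T_def Mt_def fps_of_poly_sum fps_of_poly_smult fps_of_poly_prod L_def e_def idx SSd)
  have rem: "(\<Prod>m\<in>SS f - {n}. L f m) = inverse (L f n) * D" if "n \<in> SS f" for n
  proof -
    have Ln: "L f n $ 0 \<noteq> 0" using that by (intro L0) (simp add: SS_def)
    have "D = L f n * (\<Prod>m\<in>SS f - {n}. L f m)" using that by (simp add: D prod.remove)
    then have "inverse (L f n) * D = (inverse (L f n) * L f n) * (\<Prod>m\<in>SS f - {n}. L f m)"
      by (simp add: mult.assoc)
    then show ?thesis using inverse_mult_eq_1[OF Ln] by simp
  qed
  have T2: "T = D * (\<Sum>n\<in>SS f. fps_const (e n) * inverse (L f n))"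
    by (simp add: T rem sum_distrib_left mult_ac cong: sum.cong)
  have q0: "(of_nat q :: complex) \<noteq> 0" by (simp add: q_def)
  have qD0: "(of_nat q * D) $ 0 \<noteq> 0" using D0 q0 by (simp flip: fps_of_nat)
  have "fps_X * T / (of_nat q * D) = fps_X * T * inverse (of_nat q * D)"
    by (rule fps_divide_unit[OF qD0])
  also have "\<dots> = fps_X * T * (fps_const (1 / of_nat q) * inverse D)"
    by (simp add: fps_inverse_mult fps_const_inverse divide_inverse flip: fps_of_nat)
  also have "\<dots> = (D * inverse D) * (\<Sum>n\<in>SS f. fps_const (e n / of_nat q) * (fps_X * inverse (L f n)))"
    by (simp add: T2 sum_distrib_left mult_ac fps_const_mult[symmetric] divide_inverse del: fps_const_mult)
  also have "D * inverse D = 1" by (rule inverse_mult_eq_1'[OF D0])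
  finally have R1: "fps_X * T / (of_nat q * D) =
      (\<Sum>n\<in>SS f. fps_const (e n / of_nat q) * (fps_X * inverse (L f n)))" by simp
  also have "\<dots> = (\<Sum>n\<in>SS f. fps_const (e n / of_nat q) * Abs_fps (\<lambda>j. if j = 0 then 0 else - (S p k f n ^ j)))"
    by (intro sum.cong refl) (simp add: X_inv_L SS_def)
  finally have R2: "fps_X * T / (of_nat q * D) =
      (\<Sum>n\<in>SS f. fps_const (e n / of_nat q) * Abs_fps (\<lambda>j. if j = 0 then 0 else - (S p k f n ^ j)))" .
  have G: "fps_X / (1 - of_nat q * fps_X) = Abs_fps (\<lambda>n. if n = 0 then 0 else (of_nat q :: complex) ^ (n - 1))"
    using geo[of "of_nat q"] by (simp flip: fps_of_nat)
  show ?thesis unfolding q_def[symmetric] D_def[symmetric] T_def[symmetric] R2 G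
  proof (rule fps_ext)
    fix j
    show "Abs_fps (\<lambda>s. if s = 0 then 0 else of_nat (N s f a)) $ j =
      (Abs_fps (\<lambda>n. if n = 0 then 0 else (of_nat q :: complex) ^ (n - 1)) -
       (\<Sum>n\<in>SS f. fps_const (e n / of_nat q) * Abs_fps (\<lambda>j. if j = 0 then 0 else - (S p k f n ^ j)))) $ j"
    proof (cases "j = 0")
      case False
      then have "(of_int (u j f a) :: complex) = (\<Sum>m\<in>SS f. e m * S p k f m ^ j) / of_nat q"
        by (simp add: u_formula q_def e_def)
      then have "(of_nat (N j f a) :: complex) = of_nat q ^ (j - 1) + (\<Sum>m\<in>SS f. e m * S p k f m ^ j) / of_nat q"
        by (simp add: u_def q_def algebra_simps)
      then show ?thesis using False
        by (simp add: fps_sum_nth sum_divide_distrib sum_negf)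
    qed (simp add: fps_sum_nth)
  qed
qed

end


theorem theorem1p1:
  fixes f :: "'a::{field,finite} poly" and a :: 'a and p k :: nat
  assumes "prime p" and "k \<ge> 1" and "card (UNIV::'a set) = p ^ k" and "CHAR('a) = p"
  shows "(\<forall>i. coeff (mpoly p k f) i \<in> \<int>)
       \<and> (\<exists>g :: int poly. map_poly of_int g = mpoly p k f
            \<and> lin_rec_seq (\<lambda>s. u s f a)
            \<and> gen_poly g (\<lambda>s. u s f a)
            \<and> min_poly_seq g (\<lambda>s. u s f 0))
       \<and> Abs_fps (\<lambda>s. if s = 0 then 0 else of_nat (N s f a)) =
           fps_X / (1 - of_nat (card (UNIV::'a set)) * fps_X)
           - fps_X * fps_of_poly (Mt p k f a)
               / (of_nat (card (UNIV::'a set)) * fps_of_poly (Mf p k f))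
       \<and> Mt p k f 0 = pderiv (Mf p k f)"
proof -
  interpret fq p k "TYPE('a)" using assms by unfold_locales
  have i: "\<forall>i. coeff (mpoly p k f) i \<in> \<int>" using mpoly_int by blast
  obtain G where G: "mpoly p k f = map_poly of_int G" using intpolyE[of "mpoly p k f"] i by blast
  have Gi: "ip G = mpoly p k f" by (simp add: ip_def G)
  have gp: "gen_poly G (\<lambda>s. u s f a)" by (rule gen[OF Gi])
  have "\<exists>g :: int poly. map_poly of_int g = mpoly p k f
            \<and> lin_rec_seq (\<lambda>s. u s f a)
            \<and> gen_poly g (\<lambda>s. u s f a)
            \<and> min_poly_seq g (\<lambda>s. u s f 0)"
    using G gp minpoly[OF Gi] by (auto simp: lin_rec_seq_def)
  then show ?thesis using i fps_main Mt0 by blast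
qed

end
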